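(* There is an absolute constant $c>0$ such that the following holds. Let $\mathcal{F}$ be a finite class of functions $\mathcal{S}\times\mathcal{A}\to[0,V_{\max}]$ and $\Pi$ a finite class of policies. Suppose that for every $\pi\in\Pi$: (i) $\mathcal{T}^\pi f\in\mathcal{F}$ for all $f\in\mathcal{F}$, and (ii) $C_\pi:=\|d^\pi/d^D\|_\infty<\infty$. Let $\mathcal{D}$ consist of $n$ i.i.d. samples from $D$, and for each $\pi\in\Pi$ let $\hat f^\pi\in\arg\min_{f\in\mathcal{F}}\widehat{\mathcal{E}}(f;\pi)$. Let $\hat\pi\in\arg\max_{\pi\in\Pi}J_{\hat f^\pi}(\pi)$. Then for any $\delta\in(0,1)$, with probability at least $1-\delta$, for every $\pi_{\mathrm{cp}}\in\Pi$, $$J(\pi_{\mathrm{cp}})-J(\hat\pi)\le c\,\frac{V_{\max}}{1-\gamma}\sqrt{\frac{(\max_{\pi\in\Pi}C_\pi)\log(|\mathcal{F}||\Pi|/\delta)}{n}}.$$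
   Context: MDP $(\mathcal{S},\mathcal{A},P,R,\gamma,d_0)$ with finite $\mathcal{S},\mathcal{A}$, deterministic reward $R:\mathcal{S}\times\mathcal{A}\to[0,R_{\max}]$, $\gamma\in[0,1)$, $V_{\max}=R_{\max}/(1-\gamma)$. For a policy $\pi$: $J(\pi)=\mathbb{E}_\pi[\sum_t\gamma^tr_t]$; $f(s,\pi)=\sum_a\pi(a\mid s)f(s,a)$; $J_f(\pi)=\mathbb{E}_{s\sim d_0}[f(s,\pi)]$; $(\mathcal{T}^\pi f)(s,a)=R(s,a)+\gamma\mathbb{E}_{s'\sim P(\cdot\mid s,a)}[f(s',\pi)]$; $d^\pi(s,a)=(1-\gamma)\sum_{t\ge0}\gamma^t\Pr_\pi[s_t=s,a_t=a]$. Data distribution $d^D\in\Delta(\mathcal{S}\times\mathcal{A})$; $D$ is the distribution of $(s,a,r,s')$ with $(s,a)\sim d^D$, $r=R(s,a)$, $s'\sim P(\cdot\mid s,a)$. $\|d^\pi/d^D\|_\infty=\max_{s,a}d^\pi(s,a)/d^D(s,a)$ ($0/0=0$, nonzero$/0=\infty$). Empirical losses on dataset $\mathcal{D}$: $\widehat{\mathcal{L}}(f';f,\pi)=\frac{1}{|\mathcal{D}|}\sum_{(s,a,r,s')\in\mathcal{D}}(f'(s,a)-r-\gamma f(s',\pi))^2$ and $\widehat{\mathcal{E}}(f;\pi)=\max_{g\in\mathcal{F}}\big[\widehat{\mathcal{L}}(f;f,\pi)-\widehat{\mathcal{L}}(g;f,\pi)\big]$. Ties in argmin/argmax are broken arbitrarily.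 *)

theory Defs
  imports "HOL-Probability.Probability"
begin

text \<open>States and actions are natural numbers drawn from finite carrier sets S and A.
  Policies are stochastic: nat => nat pmf. Q-functions: nat => nat => real.\<close>

type_synonym policy = "nat \<Rightarrow> nat pmf"
type_synonym qfun = "nat \<Rightarrow> nat \<Rightarrow> real"
type_synonym sample = "nat \<times> nat \<times> real \<times> nat"

fun sdist :: "(nat \<Rightarrow> nat \<Rightarrow> nat pmf) \<Rightarrow> nat pmf \<Rightarrow> policy \<Rightarrow> nat \<Rightarrow> nat pmf" where
  "sdist P d0 pol 0 = d0"
| "sdist P d0 pol (Suc t) = bind_pmf (sdist P d0 pol t) (\<lambda>s. bind_pmf (pol s) (\<lambda>a. P s a))"

definition sadist :: "(nat \<Rightarrow> nat \<Rightarrow> nat pmf) \<Rightarrow> nat pmf \<Rightarrow> policy \<Rightarrow> nat \<Rightarrow> (nat \<times> nat) pmf" where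
  "sadist P d0 pol t = bind_pmf (sdist P d0 pol t) (\<lambda>s. map_pmf (\<lambda>a. (s, a)) (pol s))"

definition Jret :: "qfun \<Rightarrow> real \<Rightarrow> (nat \<Rightarrow> nat \<Rightarrow> nat pmf) \<Rightarrow> nat pmf \<Rightarrow> policy \<Rightarrow> real" where
  "Jret R \<gamma> P d0 pol =
     (\<Sum>t. \<gamma> ^ t * measure_pmf.expectation (sadist P d0 pol t) (\<lambda>(s, a). R s a))"

definition docc :: "real \<Rightarrow> (nat \<Rightarrow> nat \<Rightarrow> nat pmf) \<Rightarrow> nat pmf \<Rightarrow> policy \<Rightarrow> nat \<Rightarrow> nat \<Rightarrow> real" where
  "docc \<gamma> P d0 pol s a = (1 - \<gamma>) * (\<Sum>t. \<gamma> ^ t * pmf (sadist P d0 pol t) (s, a))"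

text \<open>Concentrability C_pi = max_{s,a} d^pol(s,a)/d^D(s,a) (with 0/0 = 0; finiteness is a
  separate hypothesis, under which this Max is the paper's quantity).\<close>
definition Cconc :: "nat set \<Rightarrow> nat set \<Rightarrow> real \<Rightarrow> (nat \<Rightarrow> nat \<Rightarrow> nat pmf) \<Rightarrow> nat pmf
                     \<Rightarrow> (nat \<times> nat) pmf \<Rightarrow> policy \<Rightarrow> real" where
  "Cconc S A \<gamma> P d0 dD pol = Max ((\<lambda>(s, a). docc \<gamma> P d0 pol s a / pmf dD (s, a)) ` (S \<times> A))"

definition fpol :: "qfun \<Rightarrow> policy \<Rightarrow> nat \<Rightarrow> real" where
  "fpol f pol s = measure_pmf.expectation (pol s) (\<lambda>a. f s a)"

definition Jf :: "nat pmf \<Rightarrow> qfun \<Rightarrow> policy \<Rightarrow> real" where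
  "Jf d0 f pol = measure_pmf.expectation d0 (\<lambda>s. fpol f pol s)"

definition Tpi :: "nat set \<Rightarrow> nat set \<Rightarrow> qfun \<Rightarrow> real \<Rightarrow> (nat \<Rightarrow> nat \<Rightarrow> nat pmf)
                   \<Rightarrow> policy \<Rightarrow> qfun \<Rightarrow> qfun" where
  "Tpi S A R \<gamma> P pol f = (\<lambda>s a. if s \<in> S \<and> a \<in> A
       then R s a + \<gamma> * measure_pmf.expectation (P s a) (\<lambda>s'. fpol f pol s') else 0)"

definition Ddist :: "qfun \<Rightarrow> (nat \<Rightarrow> nat \<Rightarrow> nat pmf) \<Rightarrow> (nat \<times> nat) pmf \<Rightarrow> sample pmf" where
  "Ddist R P dD = bind_pmf dD (\<lambda>(s, a). map_pmf (\<lambda>s'. (s, a, R s a, s')) (P s a))"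

definition dataset :: "nat \<Rightarrow> sample pmf \<Rightarrow> (nat \<Rightarrow> sample) pmf" where
  "dataset n D = Pi_pmf {..<n} (0, 0, 0, 0) (\<lambda>_. D)"

definition Lhat :: "real \<Rightarrow> nat \<Rightarrow> (nat \<Rightarrow> sample) \<Rightarrow> qfun \<Rightarrow> qfun \<Rightarrow> policy \<Rightarrow> real" where
  "Lhat \<gamma> n Ds f' f pol =
     (1 / real n) * (\<Sum>i<n. (case Ds i of (s, a, r, s') \<Rightarrow> (f' s a - r - \<gamma> * fpol f pol s')\<^sup>2))"

definition Ehat :: "qfun set \<Rightarrow> real \<Rightarrow> nat \<Rightarrow> (nat \<Rightarrow> sample) \<Rightarrow> qfun \<Rightarrow> policy \<Rightarrow> real" where
  "Ehat F \<gamma> n Ds f pol = Max ((\<lambda>g. Lhat \<gamma> n Ds f f pol - Lhat \<gamma> n Ds g f pol) ` F)"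

end

theory Submission
  imports Defs
begin

lemma pmf_int_bnd:
  assumes "\<And>x. x \<in> set_pmf M \<Longrightarrow> \<bar>h x\<bar> \<le> (d::real)"
  shows "integrable (measure_pmf M) h"
  by (rule measure_pmf.integrable_const_bound[where B=d]) (use assms in \<open>auto intro!: AE_pmfI\<close>)

lemma pmf_exp_abs_le:
  assumes "\<And>x. x \<in> set_pmf M \<Longrightarrow> \<bar>h x\<bar> \<le> (d::real)"
  shows "\<bar>measure_pmf.expectation M h\<bar> \<le> d"
proof -
  have "\<bar>measure_pmf.expectation M h\<bar> \<le> measure_pmf.expectation M (\<lambda>x. \<bar>h x\<bar>)"
    using integral_norm_bound[of M h] by simp
  also have "\<dots> \<le> measure_pmf.expectation M (\<lambda>x. d)"
    by (intro integral_mono_AE pmf_int_bnd[of _ _ d] AE_pmfI) (use assms in \<open>auto intro: order.trans[OF abs_ge_zero]\<close>)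
  also have "\<dots> = d" by simp
  finally show ?thesis .
qed

lemma pmf_exp_le:
  assumes "\<And>x. x \<in> set_pmf M \<Longrightarrow> \<bar>h x\<bar> \<le> (d::real)"
    "\<And>x. x \<in> set_pmf M \<Longrightarrow> \<bar>g x\<bar> \<le> (d'::real)"
    "\<And>x. x \<in> set_pmf M \<Longrightarrow> h x \<le> g x"
  shows "measure_pmf.expectation M h \<le> measure_pmf.expectation M g"
  by (intro integral_mono_AE pmf_int_bnd AE_pmfI) (use assms in auto)

lemma exp_bind_fin:
  fixes h :: "'b \<Rightarrow> real"
  assumes "finite A" "\<And>x. x \<in> A \<Longrightarrow> finite (set_pmf (f x))" "set_pmf p \<subseteq> A"
  shows "measure_pmf.expectation (bind_pmf p f) h = measure_pmf.expectation p (\<lambda>x. measure_pmf.expectation (f x) h)"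
proof -
  have "measure_pmf.expectation (p \<bind> f) h = (\<Sum>a\<in>A. pmf p a *\<^sub>R measure_pmf.expectation (f a) h)"
    by (rule pmf_expectation_bind) (use assms in auto)
  also have "\<dots> = measure_pmf.expectation p (\<lambda>x. measure_pmf.expectation (f x) h)"
    by (subst integral_measure_pmf[OF assms(1)]) (use assms(3) in auto)
  finally show ?thesis .
qed

lemma exp_fin_sum:
  fixes h :: "'b \<Rightarrow> real"
  assumes "finite A" "set_pmf p \<subseteq> A"
  shows "measure_pmf.expectation p h = (\<Sum>a\<in>A. pmf p a * h a)"
  by (subst integral_measure_pmf[OF assms(1)]) (use assms(2) in auto)

lemma exp_le_quad:
  fixes x :: real assumes "\<bar>x\<bar> \<le> 1" shows "exp x \<le> 1 + x + x\<^sup>2"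
proof (cases "x \<ge> 0")
  case True thus ?thesis using exp_bound assms by auto
next
  case False
  define y where "y = -x"
  have y: "0 \<le> y" "y \<le> 1" using False assms y_def by auto
  have a: "1 + y + y\<^sup>2/2 \<le> exp y" using exp_lower_Taylor_quadratic y by auto
  have b: "(1 - y + y\<^sup>2) * (1 + y + y\<^sup>2/2) \<ge> 1"
  proof -
    have "(1 - y + y\<^sup>2) * (1 + y + y\<^sup>2/2) = 1 + y\<^sup>2/2 + y^3/2 + y^4/2"
      by (simp add: power2_eq_square power3_eq_cube power4_eq_xxxx divide_simps) (simp add: algebra_simps)
    moreover have "y^3 \<ge> 0" "y^4 \<ge> 0" "y\<^sup>2 \<ge> 0" using y by auto
    ultimately show ?thesis by linarith
  qed
  have c: "1 - y + y\<^sup>2 > 0"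
  proof (cases "y < 1")
    case True thus ?thesis using zero_le_power2[of y] by linarith
  next
    case False thus ?thesis using y by simp
  qed
  have "1 \<le> (1 - y + y\<^sup>2) * exp y"
    using mult_left_mono[of "1 + y + y\<^sup>2/2" "exp y" "1 - y + y\<^sup>2"] a b c by linarith
  hence "exp (-y) \<le> 1 - y + y\<^sup>2"
    by (simp add: exp_minus inverse_eq_divide divide_le_eq mult.commute)
  thus ?thesis using y_def by simp
qed

lemma summable_geom_bnd:
  fixes b :: "nat \<Rightarrow> real"
  assumes "0 \<le> g" "g < 1" "\<And>t. \<bar>b t\<bar> \<le> B"
  shows "summable (\<lambda>t. g ^ t * b t)"
proof (rule summable_comparison_test[where g="\<lambda>t. B * g ^ t"])
  show "\<exists>N. \<forall>n\<ge>N. norm (g ^ n * b n) \<le> B * g ^ n"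
  proof (intro exI[of _ 0] allI impI)
    fix n :: nat
    show "norm (g ^ n * b n) \<le> B * g ^ n"
      using mult_right_mono[OF assms(3)[of n] zero_le_power[OF assms(1)]] assms(1) by (simp add: abs_mult mult.commute)
  qed
  show "summable (\<lambda>t. B * g ^ t)" using assms by (intro summable_mult summable_geometric) auto
qed

locale mdp =
  fixes S A :: "nat set" and P :: "nat \<Rightarrow> nat \<Rightarrow> nat pmf" and R :: qfun
    and Rmax \<gamma> :: real and d0 :: "nat pmf" and dD :: "(nat \<times> nat) pmf"
  assumes fS: "finite S" and fA: "finite A"
    and P_S: "\<And>s a. s \<in> S \<Longrightarrow> a \<in> A \<Longrightarrow> set_pmf (P s a) \<subseteq> S"
    and R_b: "\<And>s a. s \<in> S \<Longrightarrow> a \<in> A \<Longrightarrow> 0 \<le> R s a \<and> R s a \<le> Rmax"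
    and g0: "0 \<le> \<gamma>" and g1: "\<gamma> < 1"
    and d0S: "set_pmf d0 \<subseteq> S" and dDSA: "set_pmf dD \<subseteq> S \<times> A"
begin

definition V where "V = Rmax / (1 - \<gamma>)"
definition gp :: "policy \<Rightarrow> bool" where "gp pol \<longleftrightarrow> (\<forall>s\<in>S. set_pmf (pol s) \<subseteq> A)"
definition bnd :: "qfun \<Rightarrow> bool" where
  "bnd f \<longleftrightarrow> (\<forall>s a. (s \<in> S \<and> a \<in> A \<longrightarrow> 0 \<le> f s a \<and> f s a \<le> V) \<and> (\<not> (s \<in> S \<and> a \<in> A) \<longrightarrow> f s a = 0))"

abbreviation "T pol f \<equiv> Tpi S A R \<gamma> P pol f"

lemma finP: "s \<in> S \<Longrightarrow> a \<in> A \<Longrightarrow> finite (set_pmf (P s a))"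
  using P_S fS finite_subset by blast

lemma finpol: "gp pol \<Longrightarrow> s \<in> S \<Longrightarrow> finite (set_pmf (pol s))"
  using fA finite_subset unfolding gp_def by blast

lemma finP2: "gp pol \<Longrightarrow> s \<in> S \<Longrightarrow> a \<in> set_pmf (pol s) \<Longrightarrow> finite (set_pmf (P s a))"
  using finP unfolding gp_def by blast

lemma sdist_S: "gp pol \<Longrightarrow> set_pmf (sdist P d0 pol t) \<subseteq> S"
proof (induction t)
  case 0 thus ?case using d0S by simp
next
  case (Suc t)
  thus ?case using P_S unfolding gp_def by (fastforce simp: set_bind_pmf)
qed

lemma sadist_SA: "gp pol \<Longrightarrow> set_pmf (sadist P d0 pol t) \<subseteq> S \<times> A"
  using sdist_S[of pol t] unfolding sadist_def gp_def by (auto simp: set_bind_pmf)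

lemma fin_sdist: "gp pol \<Longrightarrow> finite (set_pmf (sdist P d0 pol t))"
  using sdist_S fS finite_subset by blast

lemma fin_sadist: "gp pol \<Longrightarrow> finite (set_pmf (sadist P d0 pol t))"
  using sadist_SA fS fA finite_subset by (metis finite_SigmaI)

lemma V_nonneg: "Rmax \<ge> 0 \<Longrightarrow> V \<ge> 0" using g1 unfolding V_def by simp

lemma E_sadist: fixes h :: "_ \<Rightarrow> real" shows "gp pol \<Longrightarrow> measure_pmf.expectation (sadist P d0 pol t) h
   = measure_pmf.expectation (sdist P d0 pol t) (\<lambda>s. measure_pmf.expectation (pol s) (\<lambda>a. h (s, a)))"
  unfolding sadist_def
  by (rule trans[OF exp_bind_fin[OF fS]]) (auto simp: sdist_S finpol)

lemma E_sdist_Suc: fixes h :: "_ \<Rightarrow> real" shows "gp pol \<Longrightarrow> measure_pmf.expectation (sdist P d0 pol (Suc t)) h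
   = measure_pmf.expectation (sdist P d0 pol t) (\<lambda>s. measure_pmf.expectation (pol s) (\<lambda>a.
        measure_pmf.expectation (P s a) h))"
proof -
  assume gp: "gp pol"
  have "measure_pmf.expectation (sdist P d0 pol (Suc t)) h
     = measure_pmf.expectation (sdist P d0 pol t) (\<lambda>s. measure_pmf.expectation (pol s \<bind> P s) h)"
    by simp (rule exp_bind_fin[OF fS], use gp in \<open>auto simp: sdist_S set_bind_pmf finP2 finpol\<close>)
  also have "\<dots> = measure_pmf.expectation (sdist P d0 pol t) (\<lambda>s. measure_pmf.expectation (pol s) (\<lambda>a.
        measure_pmf.expectation (P s a) h))"
  proof (intro integral_cong_AE AE_pmfI)
    fix s assume "s \<in> set_pmf (sdist P d0 pol t)"
    hence s: "s \<in> S" using sdist_S gp by auto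
    show "measure_pmf.expectation (pol s \<bind> P s) h = measure_pmf.expectation (pol s) (\<lambda>a.
        measure_pmf.expectation (P s a) h)"
      by (rule exp_bind_fin[OF fA]) (use gp s in \<open>auto simp: gp_def finP\<close>)
  qed auto
  finally show ?thesis .
qed

lemma fpol_bnd: "bnd f \<Longrightarrow> gp pol \<Longrightarrow> s \<in> S \<Longrightarrow> 0 \<le> fpol f pol s \<and> fpol f pol s \<le> V"
proof -
  assume b: "bnd f" and gp: "gp pol" and s: "s \<in> S"
  have A: "\<And>a. a \<in> set_pmf (pol s) \<Longrightarrow> 0 \<le> f s a \<and> f s a \<le> V" using b gp s unfolding bnd_def gp_def by auto
  have "0 \<le> fpol f pol s" unfolding fpol_def by (intro integral_nonneg_AE AE_pmfI) (use A in auto)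
  moreover have "fpol f pol s \<le> measure_pmf.expectation (pol s) (\<lambda>a. V)"
    unfolding fpol_def by (intro integral_mono_AE AE_pmfI integrable_measure_pmf_finite finpol gp s) (use A in auto)
  ultimately show ?thesis by simp
qed

lemma Tpi_in: "s \<in> S \<Longrightarrow> a \<in> A \<Longrightarrow> T pol f s a = R s a + \<gamma> * measure_pmf.expectation (P s a) (fpol f pol)"
  unfolding Tpi_def by simp

definition q where "q pol f t = measure_pmf.expectation (sdist P d0 pol t) (fpol f pol)"
definition rr where "rr pol t = measure_pmf.expectation (sadist P d0 pol t) (\<lambda>(s, a). R s a)"

lemma q_sadist: "gp pol \<Longrightarrow> measure_pmf.expectation (sadist P d0 pol t) (\<lambda>(s, a). f s a) = q pol f t"
  unfolding q_def fpol_def[abs_def] by (subst E_sadist) auto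

lemma T_sadist: "gp pol \<Longrightarrow>
  measure_pmf.expectation (sadist P d0 pol t) (\<lambda>(s, a). T pol f s a) = rr pol t + \<gamma> * q pol f (Suc t)"
proof -
  assume gp: "gp pol"
  let ?E = "measure_pmf.expectation"
  have "?E (sadist P d0 pol t) (\<lambda>(s, a). T pol f s a)
      = ?E (sdist P d0 pol t) (\<lambda>s. ?E (pol s) (\<lambda>a. T pol f s a))"
    by (subst E_sadist[OF gp]) simp
  also have "\<dots> = ?E (sdist P d0 pol t) (\<lambda>s. ?E (pol s) (\<lambda>a. R s a)
        + \<gamma> * ?E (pol s) (\<lambda>a. ?E (P s a) (fpol f pol)))"
  proof (intro integral_cong_AE AE_pmfI)
    fix s assume "s \<in> set_pmf (sdist P d0 pol t)"
    hence s: "s \<in> S" using sdist_S gp by auto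
    have "?E (pol s) (\<lambda>a. T pol f s a) = ?E (pol s) (\<lambda>a. R s a + \<gamma> * ?E (P s a) (fpol f pol))"
    proof (intro integral_cong_AE AE_pmfI)
      fix a assume "a \<in> set_pmf (pol s)"
      hence "a \<in> A" using gp s unfolding gp_def by auto
      thus "T pol f s a = R s a + \<gamma> * ?E (P s a) (fpol f pol)" by (rule Tpi_in[OF s])
    qed auto
    also have "\<dots> = ?E (pol s) (\<lambda>a. R s a) + \<gamma> * ?E (pol s) (\<lambda>a. ?E (P s a) (fpol f pol))"
      using finpol[OF gp s] by (simp add: integrable_measure_pmf_finite)
    finally show "?E (pol s) (\<lambda>a. T pol f s a) = ?E (pol s) (\<lambda>a. R s a)
        + \<gamma> * ?E (pol s) (\<lambda>a. ?E (P s a) (fpol f pol))" .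
  qed auto
  also have "\<dots> = ?E (sdist P d0 pol t) (\<lambda>s. ?E (pol s) (\<lambda>a. R s a))
        + \<gamma> * ?E (sdist P d0 pol t) (\<lambda>s. ?E (pol s) (\<lambda>a. ?E (P s a) (fpol f pol)))"
    using fin_sdist[OF gp] by (simp add: integrable_measure_pmf_finite)
  also have "\<dots> = rr pol t + \<gamma> * q pol f (Suc t)"
    unfolding rr_def q_def E_sdist_Suc[OF gp] E_sadist[OF gp] by simp
  finally show ?thesis .
qed

end

context mdp begin

lemma q_bnd: "bnd f \<Longrightarrow> gp pol \<Longrightarrow> \<bar>q pol f t\<bar> \<le> V"
  unfolding q_def by (rule pmf_exp_abs_le) (use fpol_bnd sdist_S in fastforce)

lemma rr_bnd: "gp pol \<Longrightarrow> \<bar>rr pol t\<bar> \<le> Rmax"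
  unfolding rr_def by (rule pmf_exp_abs_le) (use R_b sadist_SA in fastforce)

lemma E_diff_sadist: "gp pol \<Longrightarrow> measure_pmf.expectation (sadist P d0 pol t) (\<lambda>(s, a). f s a - T pol f s a)
   = measure_pmf.expectation (sadist P d0 pol t) (\<lambda>(s, a). f s a) - measure_pmf.expectation (sadist P d0 pol t) (\<lambda>(s, a). T pol f s a)"
proof -
  assume gp: "gp pol"
  show ?thesis unfolding split_def using fin_sadist[OF gp] by (simp add: integrable_measure_pmf_finite)
qed

lemma perf: assumes b: "bnd f" and gp: "gp pol"
  shows "Jf d0 f pol - Jret R \<gamma> P d0 pol
     = (\<Sum>t. \<gamma> ^ t * measure_pmf.expectation (sadist P d0 pol t) (\<lambda>(s, a). f s a - T pol f s a))"
proof -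
  have e: "measure_pmf.expectation (sadist P d0 pol t) (\<lambda>(s, a). f s a - T pol f s a)
     = q pol f t - rr pol t - \<gamma> * q pol f (Suc t)" for t
    using E_diff_sadist[OF gp] q_sadist[OF gp] T_sadist[OF gp] by simp
  have s1: "summable (\<lambda>t. \<gamma> ^ t * q pol f t)" by (rule summable_geom_bnd[OF g0 g1 q_bnd[OF b gp]])
  have s2: "summable (\<lambda>t. \<gamma> ^ t * rr pol t)" by (rule summable_geom_bnd[OF g0 g1 rr_bnd[OF gp]])
  have s3: "summable (\<lambda>t. \<gamma> ^ Suc t * q pol f (Suc t))"
    using s1 summable_Suc_iff[of "\<lambda>t. \<gamma> ^ t * q pol f t"] by simp
  have "(\<Sum>t. \<gamma> ^ t * measure_pmf.expectation (sadist P d0 pol t) (\<lambda>(s, a). f s a - T pol f s a))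
      = (\<Sum>t. (\<gamma> ^ t * q pol f t - \<gamma> ^ t * rr pol t) - \<gamma> ^ Suc t * q pol f (Suc t))"
    by (simp add: e algebra_simps)
  also have "\<dots> = ((\<Sum>t. \<gamma> ^ t * q pol f t) - (\<Sum>t. \<gamma> ^ t * rr pol t)) - (\<Sum>t. \<gamma> ^ Suc t * q pol f (Suc t))"
    using s1 s2 s3 by (simp add: suminf_diff summable_diff)
  also have "(\<Sum>t. \<gamma> ^ Suc t * q pol f (Suc t)) = (\<Sum>t. \<gamma> ^ t * q pol f t) - q pol f 0"
    using suminf_split_head[OF s1] by simp
  also have "q pol f 0 = Jf d0 f pol" unfolding q_def Jf_def by simp
  also have "(\<Sum>t. \<gamma> ^ t * rr pol t) = Jret R \<gamma> P d0 pol" unfolding rr_def Jret_def by simp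
  finally show ?thesis by simp
qed

abbreviation "w pol x \<equiv> docc \<gamma> P d0 pol (fst x) (snd x)"

lemma docc_sum: fixes h :: "nat \<times> nat \<Rightarrow> real" assumes gp: "gp pol"
  shows "(\<Sum>x\<in>S \<times> A. w pol x * h x) = (1 - \<gamma>) * (\<Sum>t. \<gamma> ^ t * measure_pmf.expectation (sadist P d0 pol t) h)"
proof -
  have sm: "summable (\<lambda>t. \<gamma> ^ t * (pmf (sadist P d0 pol t) x * c))" for x c
  proof (rule summable_geom_bnd[OF g0 g1])
    fix t
    have "\<bar>pmf (sadist P d0 pol t) x\<bar> \<le> 1" using pmf_le_1[of "sadist P d0 pol t" x] by simp
    thus "\<bar>pmf (sadist P d0 pol t) x * c\<bar> \<le> \<bar>c\<bar>"
      unfolding abs_mult by (rule mult_left_le_one_le[OF abs_ge_zero abs_ge_zero])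
  qed
  have sm1: "summable (\<lambda>t. \<gamma> ^ t * pmf (sadist P d0 pol t) x)" for x
    using sm[of x 1] by simp
  have "(\<Sum>x\<in>S \<times> A. w pol x * h x) = (\<Sum>x\<in>S \<times> A. (1 - \<gamma>) * (\<Sum>t. \<gamma> ^ t * pmf (sadist P d0 pol t) x * h x))"
  proof (rule sum.cong[OF refl])
    fix x :: "nat \<times> nat"
    have k: "(1 - \<gamma>) * (\<Sum>t. \<gamma> ^ t * pmf (sadist P d0 pol t) x) * h x = (1 - \<gamma>) * (\<Sum>t. \<gamma> ^ t * pmf (sadist P d0 pol t) x * h x)"
    proof -
      have "(\<Sum>t. \<gamma> ^ t * pmf (sadist P d0 pol t) x) * h x = (\<Sum>t. \<gamma> ^ t * pmf (sadist P d0 pol t) x * h x)"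
        by (rule suminf_mult2[OF sm1])
      thus ?thesis by (simp add: mult.assoc)
    qed
    show "w pol x * h x = (1 - \<gamma>) * (\<Sum>t. \<gamma> ^ t * pmf (sadist P d0 pol t) x * h x)"
      using k by (simp add: docc_def)
  qed
  also have "\<dots> = (1 - \<gamma>) * (\<Sum>x\<in>S \<times> A. (\<Sum>t. \<gamma> ^ t * pmf (sadist P d0 pol t) x * h x))"
    by (simp add: sum_distrib_left)
  also have "(\<Sum>x\<in>S \<times> A. (\<Sum>t. \<gamma> ^ t * pmf (sadist P d0 pol t) x * h x))
     = (\<Sum>t. \<Sum>x\<in>S \<times> A. \<gamma> ^ t * pmf (sadist P d0 pol t) x * h x)"
    by (rule suminf_sum[symmetric]) (use sm in \<open>simp add: mult.assoc\<close>)
  also have "\<dots> = (\<Sum>t. \<gamma> ^ t * measure_pmf.expectation (sadist P d0 pol t) h)"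
    by (simp add: exp_fin_sum[OF finite_SigmaI[OF fS fA] sadist_SA[OF gp]] sum_distrib_left mult.assoc)
  finally show ?thesis .
qed

lemma docc_sum1: "gp pol \<Longrightarrow> (\<Sum>x\<in>S \<times> A. w pol x) = 1"
  using docc_sum[of pol "\<lambda>_. 1"] g0 g1 by (simp add: suminf_geometric)

lemma docc_nonneg: "0 \<le> docc \<gamma> P d0 pol s a"
proof -
  have "summable (\<lambda>t. \<gamma> ^ t * pmf (sadist P d0 pol t) (s, a))"
    by (rule summable_geom_bnd[OF g0 g1, where B=1]) (auto simp: pmf_le_1)
  thus ?thesis unfolding docc_def using g0 g1 by (intro mult_nonneg_nonneg suminf_nonneg) auto
qed

lemma perf2: assumes b: "bnd f" and gp: "gp pol"
  shows "Jf d0 f pol - Jret R \<gamma> P d0 pol = (1 / (1 - \<gamma>)) * (\<Sum>x\<in>S \<times> A. w pol x * (f (fst x) (snd x) - T pol f (fst x) (snd x)))"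
  using perf[OF b gp] docc_sum[OF gp, of "\<lambda>(s, a). f s a - T pol f s a"] g1
  by (simp add: split_def)

lemma perf_bound: assumes b: "bnd f" and gp: "gp pol"
  and hyp: "\<forall>s\<in>S. \<forall>a\<in>A. pmf dD (s, a) = 0 \<longrightarrow> docc \<gamma> P d0 pol s a = 0"
  shows "\<bar>Jf d0 f pol - Jret R \<gamma> P d0 pol\<bar> \<le> (1 / (1 - \<gamma>)) *
     sqrt (Cconc S A \<gamma> P d0 dD pol * measure_pmf.expectation dD (\<lambda>(s, a). (f s a - T pol f s a)\<^sup>2))"
proof -
  define e where "e x = f (fst x) (snd x) - T pol f (fst x) (snd x)" for x
  define C where "C = Cconc S A \<gamma> P d0 dD pol"
  have fin: "finite (S \<times> A)" using fS fA by simp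
  have wC: "w pol x \<le> C * pmf dD x" if x: "x \<in> S \<times> A" for x
  proof (cases "pmf dD x = 0")
    case True thus ?thesis using hyp x by (cases x) auto
  next
    case False
    have "w pol x / pmf dD x \<le> C" unfolding C_def Cconc_def
    proof (rule Max_ge)
      show "finite ((\<lambda>(s, a). docc \<gamma> P d0 pol s a / pmf dD (s, a)) ` (S \<times> A))" using fin by simp
      have "w pol x / pmf dD x = (\<lambda>(s, a). docc \<gamma> P d0 pol s a / pmf dD (s, a)) x" by (cases x) simp
      thus "w pol x / pmf dD x \<in> (\<lambda>(s, a). docc \<gamma> P d0 pol s a / pmf dD (s, a)) ` (S \<times> A)"
        using x by (rule rev_image_eqI[rotated])
    qed
    thus ?thesis using False pmf_nonneg[of dD x] by (simp add: divide_le_eq)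
  qed
  have cs: "(\<Sum>x\<in>S \<times> A. w pol x * e x)\<^sup>2 \<le> (\<Sum>x\<in>S \<times> A. w pol x * (e x)\<^sup>2)"
  proof -
    have "(\<Sum>x\<in>S \<times> A. sqrt (w pol x) * (sqrt (w pol x) * e x))\<^sup>2
       \<le> (\<Sum>x\<in>S \<times> A. (sqrt (w pol x))\<^sup>2) * (\<Sum>x\<in>S \<times> A. (sqrt (w pol x) * e x)\<^sup>2)"
      by (rule Cauchy_Schwarz_ineq_sum)
    thus ?thesis using docc_sum1[OF gp] docc_nonneg
      by (simp add: power_mult_distrib mult.assoc[symmetric] real_sqrt_mult_self)
  qed
  have le2: "(\<Sum>x\<in>S \<times> A. w pol x * (e x)\<^sup>2) \<le> (\<Sum>x\<in>S \<times> A. C * pmf dD x * (e x)\<^sup>2)"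
    by (intro sum_mono mult_right_mono wC) auto
  have E: "measure_pmf.expectation dD (\<lambda>(s, a). (f s a - T pol f s a)\<^sup>2) = (\<Sum>x\<in>S \<times> A. pmf dD x * (e x)\<^sup>2)"
    by (subst exp_fin_sum[OF fin dDSA]) (simp add: e_def split_def)
  have "\<bar>\<Sum>x\<in>S \<times> A. w pol x * e x\<bar> = sqrt ((\<Sum>x\<in>S \<times> A. w pol x * e x)\<^sup>2)" by simp
  also have "\<dots> \<le> sqrt (C * measure_pmf.expectation dD (\<lambda>(s, a). (f s a - T pol f s a)\<^sup>2))"
  proof -
    have "sqrt ((\<Sum>x\<in>S \<times> A. w pol x * e x)\<^sup>2) \<le> sqrt (\<Sum>x\<in>S \<times> A. C * pmf dD x * (e x)\<^sup>2)"
      by (rule real_sqrt_le_mono) (use cs le2 in linarith)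
    also have "(\<Sum>x\<in>S \<times> A. C * pmf dD x * (e x)\<^sup>2) = C * (\<Sum>x\<in>S \<times> A. pmf dD x * (e x)\<^sup>2)"
      by (simp add: sum_distrib_left mult.assoc)
    finally show ?thesis unfolding E .
  qed
  finally have "\<bar>\<Sum>x\<in>S \<times> A. w pol x * e x\<bar> \<le> sqrt (C * measure_pmf.expectation dD (\<lambda>(s, a). (f s a - T pol f s a)\<^sup>2))" .
  thus ?thesis using perf2[OF b gp] g1 unfolding e_def C_def by (simp add: abs_mult divide_le_eq mult.commute)
qed

end

lemma exists_repeat:
  fixes sq :: "nat \<Rightarrow> 'a"
  assumes "finite F" "\<And>k. sq k \<in> F"
  shows "\<exists>i j. i < j \<and> sq i = sq j"
proof -
  have "\<not> inj sq"
  proof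
    assume "inj sq"
    hence "finite (UNIV :: nat set)"
      using finite_imageD[of sq UNIV] finite_subset[of "range sq" F] assms by auto
    thus False by simp
  qed
  then obtain i j where "i \<noteq> j" "sq i = sq j" unfolding inj_def by blast
  thus ?thesis by (metis linorder_neqE_nat)
qed

context mdp begin

lemma fpol_diff: assumes gp: "gp pol" and s: "s \<in> S"
  and d: "\<forall>s\<in>S. \<forall>a\<in>A. \<bar>f s a - g s a\<bar> \<le> dd"
  shows "\<bar>fpol f pol s - fpol g pol s\<bar> \<le> dd"
proof -
  have "fpol f pol s - fpol g pol s = measure_pmf.expectation (pol s) (\<lambda>a. f s a - g s a)"
    unfolding fpol_def using finpol[OF gp s] by (simp add: integrable_measure_pmf_finite)
  also have "\<bar>\<dots>\<bar> \<le> dd" by (rule pmf_exp_abs_le) (use gp s d in \<open>auto simp: gp_def\<close>)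
  finally show ?thesis .
qed

lemma T_contr: assumes gp: "gp pol"
  and d: "\<forall>s\<in>S. \<forall>a\<in>A. \<bar>f s a - g s a\<bar> \<le> dd"
  shows "\<forall>s\<in>S. \<forall>a\<in>A. \<bar>T pol f s a - T pol g s a\<bar> \<le> \<gamma> * dd"
proof (intro ballI)
  fix s a assume s: "s \<in> S" and a: "a \<in> A"
  have "T pol f s a - T pol g s a = \<gamma> * measure_pmf.expectation (P s a) (\<lambda>s'. fpol f pol s' - fpol g pol s')"
    using finP[OF s a] s a by (simp add: Tpi_in integrable_measure_pmf_finite algebra_simps)
  also have "\<bar>\<dots>\<bar> \<le> \<gamma> * dd"
    using g0 pmf_exp_abs_le[of "P s a" "\<lambda>s'. fpol f pol s' - fpol g pol s'" dd]
      fpol_diff[OF gp _ d] P_S[OF s a]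
    by (auto simp: abs_mult intro!: mult_left_mono)
  finally show "\<bar>T pol f s a - T pol g s a\<bar> \<le> \<gamma> * dd" .
qed

lemma fixpt: assumes F: "finite F" and f0: "f0 \<in> F" and bF: "\<forall>f\<in>F. bnd f"
  and TF: "\<forall>f\<in>F. T pol f \<in> F" and gp: "gp pol"
  shows "\<exists>Q\<in>F. T pol Q = Q"
proof -
  define sq where "sq k = (T pol ^^ k) f0" for k
  have sqF: "sq k \<in> F" for k unfolding sq_def by (induction k) (use f0 TF in auto)
  have sqS: "sq (Suc k) = T pol (sq k)" for k unfolding sq_def by simp
  obtain i j where ij: "i < j" "sq i = sq j" using exists_repeat[OF F sqF] by blast
  define p where "p = j - i"
  have p: "p \<ge> 1" "j = i + p" using ij unfolding p_def by auto
  have per: "sq (i + k + p) = sq (i + k)" for k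
  proof (induction k)
    case 0 thus ?case using ij p by simp
  next
    case (Suc k)
    have "sq (i + Suc k + p) = T pol (sq (i + k + p))" using sqS[of "i + k + p"] by simp
    also have "\<dots> = T pol (sq (i + k))" using Suc by simp
    also have "\<dots> = sq (i + Suc k)" using sqS[of "i + k"] by simp
    finally show ?case .
  qed
  have per2: "sq (i + m * p) = sq i" for m
  proof (induction m)
    case (Suc m) thus ?case using per[of "m * p"] by (simp add: add.assoc add.commute[of p])
  qed simp
  have per3: "sq (Suc (i + m * p)) = sq (Suc i)" for m using per2[of m] sqS by metis
  have dec: "\<forall>s\<in>S. \<forall>a\<in>A. \<bar>sq (i + k) s a - sq (Suc (i + k)) s a\<bar> \<le> \<gamma> ^ k * V" for k
  proof (induction k)
    case 0
    have "bnd (sq i)" "bnd (sq (Suc i))" using bF sqF by auto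
    thus ?case unfolding bnd_def by (auto simp: abs_le_iff) (smt (verit))+
  next
    case (Suc k)
    from T_contr[OF gp Suc] show ?case by (simp add: sqS mult.assoc)
  qed
  have eq: "sq i s a = sq (Suc i) s a" if s: "s \<in> S" and a: "a \<in> A" for s a
  proof (rule ccontr)
    assume ne: "sq i s a \<noteq> sq (Suc i) s a"
    define x where "x = \<bar>sq i s a - sq (Suc i) s a\<bar>"
    have x0: "x > 0" using ne unfolding x_def by simp
    have xb: "x \<le> \<gamma> ^ m * V" for m
    proof -
      have "x \<le> \<gamma> ^ (m * p) * V" using dec[of "m * p"] s a per2[of m] per3[of m] unfolding x_def by simp
      also have "\<dots> \<le> \<gamma> ^ m * V"
      proof (rule mult_right_mono)
        show "\<gamma> ^ (m * p) \<le> \<gamma> ^ m" using g0 g1 p by (intro power_decreasing) auto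
        have "\<bar>sq i s a - sq (Suc i) s a\<bar> \<le> V" using dec[of 0] s a by simp
        thus "0 \<le> V" using x0 unfolding x_def by linarith
      qed
      finally show ?thesis .
    qed
    have V0: "V > 0" using xb[of 0] x0 by simp
    obtain m where "\<gamma> ^ m < x / V" using real_arch_pow_inv[of "x / V" \<gamma>] x0 V0 g1 by auto
    thus False using xb[of m] V0 by (simp add: field_simps)
  qed
  have "T pol (sq i) = sq i"
  proof (intro ext)
    fix s a
    show "T pol (sq i) s a = sq i s a"
    proof (cases "s \<in> S \<and> a \<in> A")
      case True thus ?thesis using eq sqS by metis
    next
      case False
      have "bnd (sq i)" using bF sqF by auto
      thus ?thesis using False unfolding bnd_def Tpi_def by auto
    qed
  qed
  thus ?thesis using sqF by blast
qed

end

lemma E_affine: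
  fixes h :: "'a \<Rightarrow> real"
  assumes "finite (set_pmf M)"
  shows "measure_pmf.expectation M (\<lambda>x. c1 + c2 * h x) = c1 + c2 * measure_pmf.expectation M h"
  using assms by (simp add: integrable_measure_pmf_finite)

context mdp begin

definition loss :: "qfun \<Rightarrow> qfun \<Rightarrow> policy \<Rightarrow> sample \<Rightarrow> real" where
  "loss g f pol x = (case x of (s, a, r, s') \<Rightarrow> (g s a - r - \<gamma> * fpol f pol s')\<^sup>2)"
definition Zf where "Zf g f pol x = loss g f pol x - loss (T pol f) f pol x"
definition mu where "mu g f pol = measure_pmf.expectation dD (\<lambda>(s, a). (g s a - T pol f s a)\<^sup>2)"
abbreviation "DD \<equiv> Ddist R P dD"

lemma Dsupp: "x \<in> set_pmf DD \<Longrightarrow> \<exists>s a s'. x = (s, a, R s a, s') \<and> s \<in> S \<and> a \<in> A \<and> s' \<in> S"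
  using dDSA P_S unfolding Ddist_def by (fastforce simp: set_bind_pmf)

lemma finDD: "finite (set_pmf DD)"
proof -
  have "set_pmf DD \<subseteq> (\<lambda>(s, a, s'). (s, a, R s a, s')) ` (S \<times> A \<times> S)"
  proof
    fix x assume "x \<in> set_pmf DD"
    then obtain s a s' where "x = (s, a, R s a, s')" "s \<in> S" "a \<in> A" "s' \<in> S" using Dsupp by blast
    thus "x \<in> (\<lambda>(s, a, s'). (s, a, R s a, s')) ` (S \<times> A \<times> S)" by (auto intro: image_eqI[where x="(s, a, s')"])
  qed
  thus ?thesis using fS fA finite_subset by blast
qed

lemma E_DD: fixes k :: "sample \<Rightarrow> real"
  shows "measure_pmf.expectation DD k = measure_pmf.expectation dD (\<lambda>(s, a). measure_pmf.expectation (P s a) (\<lambda>s'. k (s, a, R s a, s')))"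
proof -
  have "measure_pmf.expectation DD k = measure_pmf.expectation dD
     (\<lambda>x. measure_pmf.expectation ((\<lambda>(s, a). map_pmf (\<lambda>s'. (s, a, R s a, s')) (P s a)) x) k)"
    unfolding Ddist_def by (rule exp_bind_fin[OF finite_SigmaI[OF fS fA]]) (use dDSA finP in auto)
  also have "\<dots> = measure_pmf.expectation dD (\<lambda>(s, a). measure_pmf.expectation (P s a) (\<lambda>s'. k (s, a, R s a, s')))"
    by (intro integral_cong_AE AE_pmfI) auto
  finally show ?thesis .
qed

lemma Z_form: "Zf g f pol (s, a, R s a, s') = (g s a - T pol f s a) * (g s a + T pol f s a - 2 * (R s a + \<gamma> * fpol f pol s'))"
  unfolding Zf_def loss_def by (simp add: power2_eq_square algebra_simps)

lemma V_eq: "Rmax + \<gamma> * V = V" using g1 unfolding V_def by (simp add: field_simps)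

context
  fixes g f pol
  assumes bg: "bnd g" and bf: "bnd f" and bT: "bnd (T pol f)" and gp: "gp pol"
begin

lemma Z_bnds: assumes x: "x \<in> set_pmf DD"
  shows "\<bar>Zf g f pol x\<bar> \<le> 2 * V\<^sup>2"
    "(Zf g f pol x)\<^sup>2 \<le> 4 * V\<^sup>2 * (g (fst x) (fst (snd x)) - T pol f (fst x) (fst (snd x)))\<^sup>2"
proof -
  obtain s a s' where xs: "x = (s, a, R s a, s')" and s: "s \<in> S" and a: "a \<in> A" and s': "s' \<in> S"
    using Dsupp[OF x] by blast
  define y where "y = R s a + \<gamma> * fpol f pol s'"
  have y: "0 \<le> y" "y \<le> V"
  proof -
    have "0 \<le> fpol f pol s'" "fpol f pol s' \<le> V" using fpol_bnd[OF bf gp s'] by auto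
    moreover have "0 \<le> R s a" "R s a \<le> Rmax" using R_b[OF s a] by auto
    moreover have "\<gamma> * fpol f pol s' \<le> \<gamma> * V" "0 \<le> \<gamma> * fpol f pol s'"
      using calculation g0 by (auto intro: mult_left_mono)
    ultimately show "0 \<le> y" "y \<le> V" unfolding y_def using V_eq by linarith+
  qed
  have gb: "0 \<le> g s a" "g s a \<le> V" using bg s a unfolding bnd_def by auto
  have tb: "0 \<le> T pol f s a" "T pol f s a \<le> V" using bT s a unfolding bnd_def by auto
  have Z: "Zf g f pol x = (g s a - T pol f s a) * (g s a + T pol f s a - 2 * y)"
    unfolding xs y_def by (rule Z_form)
  have a1: "\<bar>g s a - T pol f s a\<bar> \<le> V" using gb tb by linarith
  have a2: "\<bar>g s a + T pol f s a - 2 * y\<bar> \<le> 2 * V" using gb tb y by linarith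
  have "\<bar>Zf g f pol x\<bar> \<le> V * (2 * V)" unfolding Z abs_mult
    by (rule mult_mono[OF a1 a2]) (use gb in auto)
  thus "\<bar>Zf g f pol x\<bar> \<le> 2 * V\<^sup>2" by (simp add: power2_eq_square)
  have "(g s a + T pol f s a - 2 * y)\<^sup>2 \<le> (2 * V)\<^sup>2"
    using a2 by (metis abs_ge_zero power2_abs power_mono)
  hence "(Zf g f pol x)\<^sup>2 \<le> (g s a - T pol f s a)\<^sup>2 * (2 * V)\<^sup>2"
    unfolding Z power_mult_distrib by (intro mult_left_mono) auto
  thus "(Zf g f pol x)\<^sup>2 \<le> 4 * V\<^sup>2 * (g (fst x) (fst (snd x)) - T pol f (fst x) (fst (snd x)))\<^sup>2"
    unfolding xs by (simp add: power_mult_distrib mult_ac)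
qed

lemma EZ: "measure_pmf.expectation DD (Zf g f pol) = mu g f pol"
proof -
  have "measure_pmf.expectation DD (Zf g f pol)
     = measure_pmf.expectation dD (\<lambda>(s, a). measure_pmf.expectation (P s a) (\<lambda>s'. Zf g f pol (s, a, R s a, s')))"
    by (rule E_DD)
  also have "\<dots> = mu g f pol" unfolding mu_def
  proof (intro integral_cong_AE AE_pmfI)
    fix x assume x: "x \<in> set_pmf dD"
    then obtain s a where xsa: "x = (s, a)" by (cases x)
    hence s: "s \<in> S" and a: "a \<in> A" using dDSA x by auto
    have "measure_pmf.expectation (P s a) (\<lambda>s'. Zf g f pol (s, a, R s a, s'))
       = measure_pmf.expectation (P s a) (\<lambda>s'. (g s a - T pol f s a) * (g s a + T pol f s a - 2 * R s a)
           + (- 2 * \<gamma> * (g s a - T pol f s a)) * fpol f pol s')"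
      by (intro integral_cong_AE AE_pmfI) (auto simp: Z_form algebra_simps)
    also have "\<dots> = (g s a - T pol f s a) * (g s a + T pol f s a - 2 * R s a)
           + (- 2 * \<gamma> * (g s a - T pol f s a)) * measure_pmf.expectation (P s a) (fpol f pol)"
      by (rule E_affine[OF finP[OF s a]])
    also have "\<dots> = (g s a - T pol f s a)\<^sup>2"
      using Tpi_in[OF s a, of pol f] by (simp add: power2_eq_square algebra_simps)
    finally show "(case x of (s, a) \<Rightarrow> measure_pmf.expectation (P s a) (\<lambda>s'. Zf g f pol (s, a, R s a, s'))) = (case x of (s, a) \<Rightarrow> (g s a - T pol f s a)\<^sup>2)" unfolding xsa by simp
  qed auto
  finally show ?thesis .
qed

lemma EZ2: "measure_pmf.expectation DD (\<lambda>x. (Zf g f pol x)\<^sup>2) \<le> 4 * V\<^sup>2 * mu g f pol"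
proof -
  have "measure_pmf.expectation DD (\<lambda>x. (Zf g f pol x)\<^sup>2)
     \<le> measure_pmf.expectation DD (\<lambda>x. 4 * V\<^sup>2 * (g (fst x) (fst (snd x)) - T pol f (fst x) (fst (snd x)))\<^sup>2)"
    by (intro integral_mono_AE AE_pmfI integrable_measure_pmf_finite finDD Z_bnds)
  also have "\<dots> = 4 * V\<^sup>2 * mu g f pol"
    unfolding E_DD mu_def by (simp add: split_def)
  finally show ?thesis .
qed

lemma mu_nonneg: "0 \<le> mu g f pol"
  unfolding mu_def by (intro integral_nonneg_AE AE_pmfI) auto

lemma mgf: assumes V0: "V > 0"
  shows "measure_pmf.expectation DD (\<lambda>x. exp (- (1 / (8 * V\<^sup>2)) * Zf g f pol x))
     \<le> exp (- (1 / (8 * V\<^sup>2)) * mu g f pol / 2)"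
proof -
  define l where "l = 1 / (8 * V\<^sup>2)"
  have l0: "l > 0" using V0 unfolding l_def by simp
  have pw: "exp (- l * Zf g f pol x) \<le> 1 + (- l) * Zf g f pol x + l\<^sup>2 * (Zf g f pol x)\<^sup>2"
    if x: "x \<in> set_pmf DD" for x
  proof -
    have "\<bar>- l * Zf g f pol x\<bar> \<le> l * (2 * V\<^sup>2)"
      using Z_bnds(1)[OF x] l0 by (simp add: abs_mult mult_left_mono)
    also have "\<dots> \<le> 1" unfolding l_def using V0 by simp
    finally have "exp (- l * Zf g f pol x) \<le> 1 + (- l * Zf g f pol x) + (- l * Zf g f pol x)\<^sup>2"
      by (rule exp_le_quad)
    thus ?thesis by (simp add: power_mult_distrib)
  qed
  have "measure_pmf.expectation DD (\<lambda>x. exp (- l * Zf g f pol x))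
     \<le> measure_pmf.expectation DD (\<lambda>x. 1 + (- l) * Zf g f pol x + l\<^sup>2 * (Zf g f pol x)\<^sup>2)"
    by (intro integral_mono_AE AE_pmfI integrable_measure_pmf_finite finDD pw)
  also have "\<dots> = 1 - l * mu g f pol + l\<^sup>2 * measure_pmf.expectation DD (\<lambda>x. (Zf g f pol x)\<^sup>2)"
    using finDD EZ by (simp add: integrable_measure_pmf_finite)
  also have "\<dots> \<le> 1 - l * mu g f pol + l\<^sup>2 * (4 * V\<^sup>2 * mu g f pol)"
    using EZ2 by (intro add_left_mono mult_left_mono) auto
  also have "l\<^sup>2 * (4 * V\<^sup>2 * mu g f pol) = l * mu g f pol / 2"
    unfolding l_def using V0 by (simp add: power2_eq_square field_simps)
  also have "1 - l * mu g f pol + l * mu g f pol / 2 \<le> exp (- l * mu g f pol / 2)"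
    using exp_ge_add_one_self[of "- l * mu g f pol / 2"] by simp
  finally show ?thesis unfolding l_def .
qed

end
end

context mdp begin

lemma fin_data: "finite (set_pmf (dataset n DD))"
  unfolding dataset_def by (subst set_Pi_pmf) (auto intro!: finite_PiE_dflt finDD)

lemma data_supp: "Ds \<in> set_pmf (dataset n DD) \<Longrightarrow> i < n \<Longrightarrow> Ds i \<in> set_pmf DD"
  unfolding dataset_def by (subst (asm) set_Pi_pmf) (auto simp: PiE_dflt_def)

lemma Lhat_loss: "Lhat \<gamma> n Ds g f pol = (1 / real n) * (\<Sum>i<n. loss g f pol (Ds i))"
  unfolding Lhat_def loss_def by simp

definition avgZ where "avgZ n Ds g f pol = (1 / real n) * (\<Sum>i<n. Zf g f pol (Ds i))"

lemma Lhat_diff: "Lhat \<gamma> n Ds g f pol - Lhat \<gamma> n Ds (T pol f) f pol = avgZ n Ds g f pol"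
  unfolding Lhat_loss avgZ_def Zf_def by (simp add: sum_subtractf right_diff_distrib)

context
  fixes g f pol
  assumes bg: "bnd g" and bf: "bnd f" and bT: "bnd (T pol f)" and gp: "gp pol"
begin

lemma prod_mgf: assumes V0: "V > 0"
  shows "measure_pmf.expectation (dataset n DD) (\<lambda>Ds. exp (- (1 / (8 * V\<^sup>2)) * (\<Sum>i<n. Zf g f pol (Ds i))))
    \<le> exp (- (1 / (8 * V\<^sup>2)) * mu g f pol / 2) ^ n"
proof -
  define l where "l = 1 / (8 * V\<^sup>2)"
  have "measure_pmf.expectation (dataset n DD) (\<lambda>Ds. exp (- l * (\<Sum>i<n. Zf g f pol (Ds i))))
      = measure_pmf.expectation (dataset n DD) (\<lambda>Ds. \<Prod>i\<in>{..<n}. exp (- l * Zf g f pol (Ds i)))"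
    by (simp add: sum_distrib_left exp_sum)
  also have "\<dots> = (\<Prod>i\<in>{..<n}. measure_pmf.expectation DD (\<lambda>v. exp (- l * Zf g f pol v)))"
    unfolding dataset_def
    by (rule expectation_prod_Pi_pmf) (auto intro: integrable_measure_pmf_finite finDD)
  also have "\<dots> \<le> (\<Prod>i\<in>{..<n}. exp (- l * mu g f pol / 2))"
    by (intro prod_mono conjI integral_nonneg_AE AE_pmfI)
       (use mgf[OF bg bf bT gp V0] in \<open>auto simp: l_def\<close>)
  also have "\<dots> = exp (- l * mu g f pol / 2) ^ n" by simp
  finally show ?thesis unfolding l_def .
qed

lemma single_bad: assumes V0: "V > 0" and n: "n \<ge> 1"
  shows "measure_pmf.prob (dataset n DD) {Ds. avgZ n Ds g f pol \<le> mu g f pol / 2 - Bd}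
     \<le> exp (- (1 / (8 * V\<^sup>2)) * real n * Bd)"
proof -
  define l where "l = 1 / (8 * V\<^sup>2)"
  have l0: "l > 0" using V0 unfolding l_def by simp
  define u where "u Ds = exp (- l * (\<Sum>i<n. Zf g f pol (Ds i)))" for Ds :: "nat \<Rightarrow> sample"
  define c where "c = exp (l * real n * (Bd - mu g f pol / 2))"
  have n0: "real n > 0" using n by simp
  have sub: "{Ds. avgZ n Ds g f pol \<le> mu g f pol / 2 - Bd} \<subseteq> {Ds \<in> space (measure_pmf (dataset n DD)). c \<le> u Ds}"
  proof safe
    fix Ds assume "avgZ n Ds g f pol \<le> mu g f pol / 2 - Bd"
    hence "(\<Sum>i<n. Zf g f pol (Ds i)) \<le> real n * (mu g f pol / 2 - Bd)"
      using n0 unfolding avgZ_def by (simp add: field_simps)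
    hence "l * real n * (Bd - mu g f pol / 2) \<le> - l * (\<Sum>i<n. Zf g f pol (Ds i))"
      using l0 mult_left_mono[of "(\<Sum>i<n. Zf g f pol (Ds i))" "real n * (mu g f pol / 2 - Bd)" l]
      by (simp add: algebra_simps)
    thus "c \<le> u Ds" unfolding c_def u_def by simp
  qed simp
  have "measure_pmf.prob (dataset n DD) {Ds. avgZ n Ds g f pol \<le> mu g f pol / 2 - Bd}
      \<le> measure_pmf.prob (dataset n DD) {Ds \<in> space (measure_pmf (dataset n DD)). c \<le> u Ds}"
    by (rule measure_pmf.finite_measure_mono[OF sub]) simp
  also have "\<dots> \<le> measure_pmf.expectation (dataset n DD) u / c"
    by (rule integral_Markov_inequality_measure)
       (auto simp: u_def c_def intro: integrable_measure_pmf_finite fin_data)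
  also have "\<dots> \<le> exp (- l * mu g f pol / 2) ^ n / c"
    using prod_mgf[OF V0, of n] unfolding u_def l_def c_def by (intro divide_right_mono) auto
  also have "\<dots> = exp (- l * real n * Bd)"
    unfolding c_def by (simp add: exp_of_nat_mult[symmetric] exp_diff[symmetric] algebra_simps)
  finally show ?thesis unfolding l_def .
qed

end

lemma union_bad:
  assumes F: "finite F" and Pl: "finite Pols" and bF: "\<forall>f\<in>F. bnd f" and gpP: "\<forall>pol\<in>Pols. gp pol"
    and TF: "\<forall>pol\<in>Pols. \<forall>f\<in>F. T pol f \<in> F" and V0: "V > 0" and n: "n \<ge> 1"
  shows "measure_pmf.prob (dataset n DD)
     {Ds. \<exists>g\<in>F. \<exists>f\<in>F. \<exists>pol\<in>Pols. avgZ n Ds g f pol \<le> mu g f pol / 2 - Bd}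
   \<le> real (card F) * real (card F) * real (card Pols) * exp (- (1 / (8 * V\<^sup>2)) * real n * Bd)"
proof -
  let ?B = "\<lambda>k. {Ds. avgZ n Ds (fst k) (fst (snd k)) (snd (snd k)) \<le> mu (fst k) (fst (snd k)) (snd (snd k)) / 2 - Bd}"
  have eq: "{Ds. \<exists>g\<in>F. \<exists>f\<in>F. \<exists>pol\<in>Pols. avgZ n Ds g f pol \<le> mu g f pol / 2 - Bd} = (\<Union>k\<in>F \<times> F \<times> Pols. ?B k)"
    by force
  have "measure_pmf.prob (dataset n DD) (\<Union>k\<in>F \<times> F \<times> Pols. ?B k) \<le> (\<Sum>k\<in>F \<times> F \<times> Pols. measure_pmf.prob (dataset n DD) (?B k))"
    by (rule measure_UNION_le) (use F Pl in auto)
  also have "\<dots> \<le> (\<Sum>k\<in>F \<times> F \<times> Pols. exp (- (1 / (8 * V\<^sup>2)) * real n * Bd))"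
  proof (rule sum_mono)
    fix k assume k: "k \<in> F \<times> F \<times> Pols"
    thus "measure_pmf.prob (dataset n DD) (?B k) \<le> exp (- (1 / (8 * V\<^sup>2)) * real n * Bd)"
      using single_bad[OF _ _ _ _ V0 n] bF gpP TF by auto
  qed
  also have "\<dots> = real (card F) * real (card F) * real (card Pols) * exp (- (1 / (8 * V\<^sup>2)) * real n * Bd)"
    by (simp add: card_cartesian_product)
  finally show ?thesis unfolding eq .
qed

end

context mdp begin

lemma Cconc_nonneg: assumes "S \<noteq> {}" "A \<noteq> {}" shows "0 \<le> Cconc S A \<gamma> P d0 dD pol"
proof -
  obtain s a where sa: "s \<in> S" "a \<in> A" using assms by blast
  have "0 \<le> docc \<gamma> P d0 pol s a / pmf dD (s, a)" using docc_nonneg by simp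
  also have "\<dots> \<le> Cconc S A \<gamma> P d0 dD pol" unfolding Cconc_def
    by (rule Max_ge) (use fS fA sa in \<open>auto intro!: rev_image_eqI[of "(s, a)"]\<close>)
  finally show ?thesis .
qed

lemma final_bound:
  assumes ne: "S \<noteq> {}" "A \<noteq> {}" and F: "finite F" and Pl: "finite Pols"
    and bF: "\<forall>f\<in>F. bnd f" and gpP: "\<forall>pol\<in>Pols. gp pol"
    and TF: "\<forall>pol\<in>Pols. \<forall>f\<in>F. T pol f \<in> F"
    and hyp: "\<forall>pol\<in>Pols. \<forall>s\<in>S. \<forall>a\<in>A. pmf dD (s, a) = 0 \<longrightarrow> docc \<gamma> P d0 pol s a = 0"
    and fh: "\<forall>pol\<in>Pols. fhat pol \<in> F" and ph: "polhat \<in> Pols"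
    and mx: "\<forall>pol\<in>Pols. Jf d0 (fhat pol) pol \<le> Jf d0 (fhat polhat) polhat"
    and X0: "0 \<le> X" and muX: "\<forall>pol\<in>Pols. mu (fhat pol) (fhat pol) pol \<le> X"
    and pcp: "pcp \<in> Pols"
  shows "Jret R \<gamma> P d0 pcp - Jret R \<gamma> P d0 polhat
     \<le> 2 / (1 - \<gamma>) * sqrt (Max ((Cconc S A \<gamma> P d0 dD) ` Pols) * X)"
proof -
  define Cm where "Cm = Max ((Cconc S A \<gamma> P d0 dD) ` Pols)"
  have err: "\<bar>Jf d0 (fhat pol) pol - Jret R \<gamma> P d0 pol\<bar> \<le> 1 / (1 - \<gamma>) * sqrt (Cm * X)"
    if pol: "pol \<in> Pols" for pol
  proof -
    have b: "bnd (fhat pol)" using fh bF pol by auto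
    have bT: "bnd (T pol (fhat pol))" using fh bF TF pol by auto
    have gp: "gp pol" using gpP pol by auto
    have "\<bar>Jf d0 (fhat pol) pol - Jret R \<gamma> P d0 pol\<bar> \<le> (1 / (1 - \<gamma>)) *
       sqrt (Cconc S A \<gamma> P d0 dD pol * mu (fhat pol) (fhat pol) pol)"
      using perf_bound[OF b gp] hyp pol unfolding mu_def by auto
    also have "\<dots> \<le> 1 / (1 - \<gamma>) * sqrt (Cm * X)"
    proof (intro mult_left_mono real_sqrt_le_mono)
      have c0: "0 \<le> Cconc S A \<gamma> P d0 dD pol" by (rule Cconc_nonneg[OF ne])
      have cm: "Cconc S A \<gamma> P d0 dD pol \<le> Cm" unfolding Cm_def using Pl pol by auto
      have m0: "0 \<le> mu (fhat pol) (fhat pol) pol" by (rule mu_nonneg[OF b b bT gp])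
      show "Cconc S A \<gamma> P d0 dD pol * mu (fhat pol) (fhat pol) pol \<le> Cm * X"
        using mult_mono[OF cm muX[rule_format, OF pol] _ m0] c0 cm by simp
    qed (use g1 in simp)
    finally show ?thesis .
  qed
  have "Jret R \<gamma> P d0 pcp - Jret R \<gamma> P d0 polhat
      = (Jret R \<gamma> P d0 pcp - Jf d0 (fhat pcp) pcp) + (Jf d0 (fhat pcp) pcp - Jf d0 (fhat polhat) polhat)
        + (Jf d0 (fhat polhat) polhat - Jret R \<gamma> P d0 polhat)" by simp
  also have "\<dots> \<le> 1 / (1 - \<gamma>) * sqrt (Cm * X) + 0 + 1 / (1 - \<gamma>) * sqrt (Cm * X)"
    using err[OF pcp] err[OF ph] mx pcp by (intro add_mono) auto
  finally show ?thesis unfolding Cm_def by simp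
qed

lemma stat_bound:
  assumes F: "finite F" and bF: "\<forall>f\<in>F. bnd f" and gp: "gp pol"
    and TF: "\<forall>f\<in>F. T pol f \<in> F"
    and good: "\<forall>g\<in>F. \<forall>f\<in>F. mu g f pol / 2 - Bd < avgZ n Ds g f pol"
    and fh: "fh \<in> F" and mn: "\<forall>g\<in>F. Ehat F \<gamma> n Ds fh pol \<le> Ehat F \<gamma> n Ds g pol"
  shows "mu fh fh pol \<le> 4 * Bd"
proof -
  obtain Q where Q: "Q \<in> F" "T pol Q = Q" using fixpt[OF F fh bF TF gp] by blast
  have Fne: "F \<noteq> {}" using fh by auto
  have "Ehat F \<gamma> n Ds Q pol \<le> Bd" unfolding Ehat_def
  proof (rule Max.boundedI)
    show "finite ((\<lambda>g. Lhat \<gamma> n Ds Q Q pol - Lhat \<gamma> n Ds g Q pol) ` F)" using F by simp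
    show "(\<lambda>g. Lhat \<gamma> n Ds Q Q pol - Lhat \<gamma> n Ds g Q pol) ` F \<noteq> {}" using Fne by simp
    fix y assume "y \<in> (\<lambda>g. Lhat \<gamma> n Ds Q Q pol - Lhat \<gamma> n Ds g Q pol) ` F"
    then obtain g where g: "g \<in> F" "y = Lhat \<gamma> n Ds Q Q pol - Lhat \<gamma> n Ds g Q pol" by blast
    have "y = - avgZ n Ds g Q pol" using Lhat_diff[of n Ds g Q pol] Q(2) g(2) by simp
    moreover have "mu g Q pol / 2 - Bd < avgZ n Ds g Q pol" using good g Q by auto
    moreover have "0 \<le> mu g Q pol" using mu_nonneg[of g Q pol] bF TF g Q gp by auto
    ultimately show "y \<le> Bd" by linarith
  qed
  moreover have "avgZ n Ds fh fh pol \<le> Ehat F \<gamma> n Ds fh pol"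
  proof -
    have "avgZ n Ds fh fh pol = Lhat \<gamma> n Ds fh fh pol - Lhat \<gamma> n Ds (T pol fh) fh pol"
      using Lhat_diff by simp
    also have "\<dots> \<le> Ehat F \<gamma> n Ds fh pol" unfolding Ehat_def
      by (rule Max_ge) (use F TF fh in auto)
    finally show ?thesis .
  qed
  moreover have "mu fh fh pol / 2 - Bd < avgZ n Ds fh fh pol" using good fh by auto
  moreover have "Ehat F \<gamma> n Ds fh pol \<le> Ehat F \<gamma> n Ds Q pol" using mn Q by auto
  ultimately show ?thesis by linarith
qed

lemma mu_zero: assumes "V = 0" "bnd g" "bnd (T pol f)" shows "mu g f pol = 0"
proof -
  have "mu g f pol = measure_pmf.expectation dD (\<lambda>_. 0)" unfolding mu_def
  proof (intro integral_cong_AE AE_pmfI)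
    fix x assume "x \<in> set_pmf dD"
    then obtain s a where x: "x = (s, a)" "s \<in> S" "a \<in> A" using dDSA by (cases x) auto
    thus "(case x of (s, a) \<Rightarrow> (g s a - T pol f s a)\<^sup>2) = 0"
      using assms unfolding bnd_def by fastforce
  qed auto
  thus ?thesis by simp
qed

end

lemma arith_final:
  fixes V g Cm N M d nn :: real
  assumes V: "0 \<le> V" and g: "g < 1" and Cm: "0 \<le> Cm" and N: "1 \<le> N" and M: "1 \<le> M"
    and d: "0 < d" "d < 1" and nn: "1 \<le> nn"
  shows "2 / (1 - g) * sqrt (Cm * (4 * (8 * V\<^sup>2 * ln (N * N * M / d) / nn)))
     \<le> 16 * (V / (1 - g)) * sqrt (Cm * ln (N * M / d) / nn)"
proof -
  have p1: "0 < N * M / d" using N M d by simp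
  have "N * N * M / d \<le> (N * M / d)\<^sup>2"
  proof -
    have "N * N * M / d * 1 \<le> N * N * M / d * (M / d)"
      using N M d by (intro mult_left_mono) auto
    thus ?thesis by (simp add: power2_eq_square field_simps)
  qed
  hence "ln (N * N * M / d) \<le> ln ((N * M / d)\<^sup>2)"
    using N M d by (subst ln_le_cancel_iff) auto
  also have "\<dots> = 2 * ln (N * M / d)" using p1 by (simp add: ln_realpow)
  finally have l: "ln (N * N * M / d) \<le> 2 * ln (N * M / d)" .
  have L0: "0 \<le> ln (N * M / d)"
  proof -
    have "1 * 1 \<le> N * M" using N M by (intro mult_mono) auto
    hence "1 \<le> N * M / d" using d by (simp add: le_divide_eq)
    thus ?thesis by simp
  qed
  have "Cm * (4 * (8 * V\<^sup>2 * ln (N * N * M / d) / nn)) \<le> Cm * (4 * (8 * V\<^sup>2 * (2 * ln (N * M / d)) / nn))"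
    using l Cm nn V by (intro mult_left_mono divide_right_mono) auto
  also have "\<dots> = (8 * V)\<^sup>2 * (Cm * ln (N * M / d) / nn)" by (simp add: power2_eq_square field_simps)
  finally have "sqrt (Cm * (4 * (8 * V\<^sup>2 * ln (N * N * M / d) / nn))) \<le> sqrt ((8 * V)\<^sup>2 * (Cm * ln (N * M / d) / nn))"
    by (rule real_sqrt_le_mono)
  also have "\<dots> = 8 * V * sqrt (Cm * ln (N * M / d) / nn)" using V by (simp only: real_sqrt_mult real_sqrt_abs abs_of_nonneg)
  finally have s: "sqrt (Cm * (4 * (8 * V\<^sup>2 * ln (N * N * M / d) / nn))) \<le> 8 * V * sqrt (Cm * ln (N * M / d) / nn)" .
  have "2 / (1 - g) * sqrt (Cm * (4 * (8 * V\<^sup>2 * ln (N * N * M / d) / nn))) \<le> 2 / (1 - g) * (8 * V * sqrt (Cm * ln (N * M / d) / nn))"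
    using g by (intro mult_left_mono s) auto
  also have "\<dots> = 16 * (V / (1 - g)) * sqrt (Cm * ln (N * M / d) / nn)" by simp
  finally show ?thesis .
qed

theorem theorem1:
  shows "\<exists>c>0. \<forall>(S::nat set) (A::nat set) (P::nat \<Rightarrow> nat \<Rightarrow> nat pmf) (R::qfun) (Rmax::real)
      (\<gamma>::real) (d0::nat pmf) (dD::(nat \<times> nat) pmf) (F::qfun set) (Pols::policy set)
      (n::nat) (\<delta>::real).
    finite S \<and> S \<noteq> {} \<and> finite A \<and> A \<noteq> {}
    \<and> (\<forall>s\<in>S. \<forall>a\<in>A. set_pmf (P s a) \<subseteq> S)
    \<and> (\<forall>s\<in>S. \<forall>a\<in>A. 0 \<le> R s a \<and> R s a \<le> Rmax)
    \<and> 0 \<le> \<gamma> \<and> \<gamma> < 1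
    \<and> set_pmf d0 \<subseteq> S \<and> set_pmf dD \<subseteq> S \<times> A
    \<and> finite F
    \<and> (\<forall>f\<in>F. \<forall>s a. (s \<in> S \<and> a \<in> A \<longrightarrow> 0 \<le> f s a \<and> f s a \<le> Rmax / (1 - \<gamma>))
                   \<and> (\<not> (s \<in> S \<and> a \<in> A) \<longrightarrow> f s a = 0))
    \<and> finite Pols
    \<and> (\<forall>pol\<in>Pols. (\<forall>s\<in>S. set_pmf (pol s) \<subseteq> A) \<and> (\<forall>s. s \<notin> S \<longrightarrow> pol s = return_pmf 0))
    \<and> (\<forall>pol\<in>Pols. \<forall>f\<in>F. Tpi S A R \<gamma> P pol f \<in> F)
    \<and> (\<forall>pol\<in>Pols. \<forall>s\<in>S. \<forall>a\<in>A. pmf dD (s, a) = 0 \<longrightarrow> docc \<gamma> P d0 pol s a = 0)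
    \<and> n \<ge> 1 \<and> 0 < \<delta> \<and> \<delta> < 1
    \<longrightarrow> measure_pmf.prob (dataset n (Ddist R P dD))
          {Ds. \<forall>(fhat::policy \<Rightarrow> qfun) (polhat::policy).
             (\<forall>pol\<in>Pols. fhat pol \<in> F \<and> (\<forall>g\<in>F. Ehat F \<gamma> n Ds (fhat pol) pol \<le> Ehat F \<gamma> n Ds g pol))
             \<and> polhat \<in> Pols \<and> (\<forall>pol\<in>Pols. Jf d0 (fhat pol) pol \<le> Jf d0 (fhat polhat) polhat)
             \<longrightarrow> (\<forall>pcp\<in>Pols. Jret R \<gamma> P d0 pcp - Jret R \<gamma> P d0 polhat
                   \<le> c * ((Rmax / (1 - \<gamma>)) / (1 - \<gamma>))
                       * sqrt ((Max ((Cconc S A \<gamma> P d0 dD) ` Pols))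
                               * ln (real (card F) * real (card Pols) / \<delta>) / real n))}
        \<ge> 1 - \<delta>"
proof (intro exI[of _ "16::real"] conjI allI impI)
  show "(0::real) < 16" by simp
  fix S A :: "nat set" and P :: "nat \<Rightarrow> nat \<Rightarrow> nat pmf" and R :: qfun and Rmax \<gamma> :: real
    and d0 :: "nat pmf" and dD :: "(nat \<times> nat) pmf" and F :: "qfun set" and Pols :: "policy set"
    and n :: nat and \<delta> :: real
  assume H: "finite S \<and> S \<noteq> {} \<and> finite A \<and> A \<noteq> {}
    \<and> (\<forall>s\<in>S. \<forall>a\<in>A. set_pmf (P s a) \<subseteq> S)
    \<and> (\<forall>s\<in>S. \<forall>a\<in>A. 0 \<le> R s a \<and> R s a \<le> Rmax)
    \<and> 0 \<le> \<gamma> \<and> \<gamma> < 1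
    \<and> set_pmf d0 \<subseteq> S \<and> set_pmf dD \<subseteq> S \<times> A
    \<and> finite F
    \<and> (\<forall>f\<in>F. \<forall>s a. (s \<in> S \<and> a \<in> A \<longrightarrow> 0 \<le> f s a \<and> f s a \<le> Rmax / (1 - \<gamma>))
                   \<and> (\<not> (s \<in> S \<and> a \<in> A) \<longrightarrow> f s a = 0))
    \<and> finite Pols
    \<and> (\<forall>pol\<in>Pols. (\<forall>s\<in>S. set_pmf (pol s) \<subseteq> A) \<and> (\<forall>s. s \<notin> S \<longrightarrow> pol s = return_pmf 0))
    \<and> (\<forall>pol\<in>Pols. \<forall>f\<in>F. Tpi S A R \<gamma> P pol f \<in> F)
    \<and> (\<forall>pol\<in>Pols. \<forall>s\<in>S. \<forall>a\<in>A. pmf dD (s, a) = 0 \<longrightarrow> docc \<gamma> P d0 pol s a = 0)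
    \<and> n \<ge> 1 \<and> 0 < \<delta> \<and> \<delta> < 1"
  have fS: "finite S" using H by (elim conjE) assumption
  have neS: "S \<noteq> {}" using H by (elim conjE) assumption
  have fA: "finite A" using H by (elim conjE) assumption
  have neA: "A \<noteq> {}" using H by (elim conjE) assumption
  have PS: "\<forall>s\<in>S. \<forall>a\<in>A. set_pmf (P s a) \<subseteq> S" using H by (elim conjE) assumption
  have Rb: "\<forall>s\<in>S. \<forall>a\<in>A. 0 \<le> R s a \<and> R s a \<le> Rmax" using H by (elim conjE) assumption
  have g0: "0 \<le> \<gamma>" using H by (elim conjE) assumption
  have g1: "\<gamma> < 1" using H by (elim conjE) assumption
  have d0S: "set_pmf d0 \<subseteq> S" using H by (elim conjE) assumption
  have dDS: "set_pmf dD \<subseteq> S \<times> A" using H by (elim conjE) assumption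
  have F: "finite F" using H by (elim conjE) assumption
  have Fb: "\<forall>f\<in>F. \<forall>s a. (s \<in> S \<and> a \<in> A \<longrightarrow> 0 \<le> f s a \<and> f s a \<le> Rmax / (1 - \<gamma>))
                   \<and> (\<not> (s \<in> S \<and> a \<in> A) \<longrightarrow> f s a = 0)" using H by (elim conjE) assumption
  have Pl: "finite Pols" using H by (elim conjE) assumption
  have Pb0: "\<forall>pol\<in>Pols. (\<forall>s\<in>S. set_pmf (pol s) \<subseteq> A) \<and> (\<forall>s. s \<notin> S \<longrightarrow> pol s = return_pmf 0)" using H by (elim conjE) assumption
  have Pb: "\<forall>pol\<in>Pols. (\<forall>s\<in>S. set_pmf (pol s) \<subseteq> A)" using Pb0 by blast
  have TF: "\<forall>pol\<in>Pols. \<forall>f\<in>F. Tpi S A R \<gamma> P pol f \<in> F" using H by (elim conjE) assumption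
  have hyp: "\<forall>pol\<in>Pols. \<forall>s\<in>S. \<forall>a\<in>A. pmf dD (s, a) = 0 \<longrightarrow> docc \<gamma> P d0 pol s a = 0" using H by (elim conjE) assumption
  have n: "n \<ge> 1" using H by (elim conjE) assumption
  have d0: "0 < \<delta>" using H by (elim conjE) assumption
  have d1: "\<delta> < 1" using H by (elim conjE) assumption
  interpret M: mdp S A P R Rmax \<gamma> d0 dD
    by unfold_locales (use fS fA PS Rb g0 g1 d0S dDS in auto)
  have bF: "\<forall>f\<in>F. M.bnd f" using Fb unfolding M.bnd_def M.V_def by blast
  have gpP: "\<forall>pol\<in>Pols. M.gp pol" using Pb unfolding M.gp_def by blast
  obtain s0 a0 where sa0: "s0 \<in> S" "a0 \<in> A" using neS neA by blast
  have Rm0: "0 \<le> Rmax" using Rb sa0 by force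
  have V0: "0 \<le> M.V" unfolding M.V_def using Rm0 g1 by simp
  define Tgt where "Tgt = {Ds. \<forall>(fhat::policy \<Rightarrow> qfun) (polhat::policy).
             (\<forall>pol\<in>Pols. fhat pol \<in> F \<and> (\<forall>g\<in>F. Ehat F \<gamma> n Ds (fhat pol) pol \<le> Ehat F \<gamma> n Ds g pol))
             \<and> polhat \<in> Pols \<and> (\<forall>pol\<in>Pols. Jf d0 (fhat pol) pol \<le> Jf d0 (fhat polhat) polhat)
             \<longrightarrow> (\<forall>pcp\<in>Pols. Jret R \<gamma> P d0 pcp - Jret R \<gamma> P d0 polhat
                   \<le> 16 * ((Rmax / (1 - \<gamma>)) / (1 - \<gamma>))
                       * sqrt ((Max ((Cconc S A \<gamma> P d0 dD) ` Pols))
                               * ln (real (card F) * real (card Pols) / \<delta>) / real n))}"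
  define Cm where "Cm = Max ((Cconc S A \<gamma> P d0 dD) ` Pols)"
  define L where "L = ln (real (card F) * real (card Pols) / \<delta>)"
  have key: "Ds \<in> Tgt" if X0: "0 \<le> X"
    and muX: "\<And>fh pol. pol \<in> Pols \<Longrightarrow> fh \<in> F \<Longrightarrow> (\<forall>g\<in>F. Ehat F \<gamma> n Ds fh pol \<le> Ehat F \<gamma> n Ds g pol)
        \<Longrightarrow> M.mu fh fh pol \<le> X"
    and XR: "2 / (1 - \<gamma>) * sqrt (Cm * X) \<le> 16 * ((Rmax / (1 - \<gamma>)) / (1 - \<gamma>)) * sqrt (Cm * L / real n)"
    for Ds X
    unfolding Tgt_def
  proof (intro CollectI allI impI ballI, elim conjE)
    fix fhat polhat pcp
    assume fh: "\<forall>pol\<in>Pols. fhat pol \<in> F \<and> (\<forall>g\<in>F. Ehat F \<gamma> n Ds (fhat pol) pol \<le> Ehat F \<gamma> n Ds g pol)"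
      and ph: "polhat \<in> Pols" and mx: "\<forall>pol\<in>Pols. Jf d0 (fhat pol) pol \<le> Jf d0 (fhat polhat) polhat"
      and pcp: "pcp \<in> Pols"
    have "Jret R \<gamma> P d0 pcp - Jret R \<gamma> P d0 polhat \<le> 2 / (1 - \<gamma>) * sqrt (Cm * X)"
      unfolding Cm_def
      by (rule M.final_bound[OF neS neA F Pl bF gpP TF hyp _ ph mx X0 _ pcp])
         (use fh muX in auto)
    also note XR
    finally show "Jret R \<gamma> P d0 pcp - Jret R \<gamma> P d0 polhat
                   \<le> 16 * ((Rmax / (1 - \<gamma>)) / (1 - \<gamma>))
                       * sqrt ((Max ((Cconc S A \<gamma> P d0 dD) ` Pols))
                               * ln (real (card F) * real (card Pols) / \<delta>) / real n)"
      unfolding Cm_def L_def .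
  qed
  show "1 - \<delta> \<le> measure_pmf.prob (dataset n (Ddist R P dD)) Tgt"
  proof (cases "F = {} \<or> Pols = {} \<or> M.V = 0")
    case True
    have "Tgt = UNIV"
    proof -
      { fix Ds
        have "Ds \<in> Tgt"
        proof (cases "M.V = 0")
          case True
          show ?thesis
          proof (rule key[of 0])
            fix fh pol assume "pol \<in> Pols" "fh \<in> F"
            thus "M.mu fh fh pol \<le> 0" using M.mu_zero[OF True] bF TF by auto
          qed (use True g1 in \<open>auto simp: M.V_def\<close>)
        next
          case False
          hence "F = {} \<or> Pols = {}" using \<open>F = {} \<or> Pols = {} \<or> M.V = 0\<close> by blast
          thus ?thesis unfolding Tgt_def by auto
        qed }
      thus ?thesis by blast
    qed
    thus ?thesis using d0 by simp
  next
    case False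
    hence Fne: "F \<noteq> {}" and Pne: "Pols \<noteq> {}" and Vp: "M.V > 0" using V0 by auto
    define N where "N = real (card F)"
    define K where "K = real (card Pols)"
    have N1: "1 \<le> N" unfolding N_def using F Fne by (simp add: Suc_leI card_gt_0_iff)
    have K1: "1 \<le> K" unfolding K_def using Pl Pne by (simp add: Suc_leI card_gt_0_iff)
    define Bd where "Bd = 8 * M.V\<^sup>2 * ln (N * N * K / \<delta>) / real n"
    define bad where "bad = {Ds. \<exists>g\<in>F. \<exists>f\<in>F. \<exists>pol\<in>Pols. M.avgZ n Ds g f pol \<le> M.mu g f pol / 2 - Bd}"
    have Lp0: "0 \<le> ln (N * N * K / \<delta>)"
    proof -
      have "1 * 1 \<le> N * N" using N1 by (intro mult_mono) auto
      hence "1 * 1 \<le> N * N * K" using K1 by (intro mult_mono) auto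
      hence "1 \<le> N * N * K / \<delta>" using d0 d1 by (simp add: le_divide_eq)
      thus ?thesis by simp
    qed
    have Bd0: "0 \<le> Bd" unfolding Bd_def using Lp0 by simp
    have pbad: "measure_pmf.prob (dataset n (Ddist R P dD)) bad \<le> \<delta>"
    proof -
      have "measure_pmf.prob (dataset n (Ddist R P dD)) bad
          \<le> N * N * K * exp (- (1 / (8 * M.V\<^sup>2)) * real n * Bd)"
        unfolding bad_def N_def K_def by (rule M.union_bad[OF F Pl bF gpP TF Vp n])
      also have "- (1 / (8 * M.V\<^sup>2)) * real n * Bd = - ln (N * N * K / \<delta>)"
        unfolding Bd_def using Vp n by (simp add: field_simps)
      also have "exp (- ln (N * N * K / \<delta>)) = \<delta> / (N * N * K)"
        using N1 K1 d0 by (simp add: exp_minus)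
      also have "N * N * K * (\<delta> / (N * N * K)) = \<delta>" using N1 K1 by simp
      finally show ?thesis .
    qed
    have sub: "UNIV - bad \<subseteq> Tgt"
    proof
      fix Ds assume Ds: "Ds \<in> UNIV - bad"
      hence good: "\<forall>g\<in>F. \<forall>f\<in>F. \<forall>pol\<in>Pols. M.mu g f pol / 2 - Bd < M.avgZ n Ds g f pol"
        unfolding bad_def by force
      show "Ds \<in> Tgt"
      proof (rule key[of "4 * Bd"])
        show "0 \<le> 4 * Bd" using Bd0 by simp
        fix fh pol assume pol: "pol \<in> Pols" and fh: "fh \<in> F"
          and mn: "\<forall>g\<in>F. Ehat F \<gamma> n Ds fh pol \<le> Ehat F \<gamma> n Ds g pol"
        show "M.mu fh fh pol \<le> 4 * Bd"
          by (rule M.stat_bound[OF F bF _ _ _ fh mn]) (use gpP TF good pol in auto)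
      next
        obtain p0 where p0: "p0 \<in> Pols" using Pne by blast
        have "0 \<le> Cconc S A \<gamma> P d0 dD p0" by (rule M.Cconc_nonneg[OF neS neA])
        also have "\<dots> \<le> Cm" unfolding Cm_def using Pl p0 by (intro Max_ge) auto
        finally have Cm0: "0 \<le> Cm" .
        have "2 / (1 - \<gamma>) * sqrt (Cm * (4 * (8 * M.V\<^sup>2 * ln (N * N * K / \<delta>) / real n)))
           \<le> 16 * (M.V / (1 - \<gamma>)) * sqrt (Cm * ln (N * K / \<delta>) / real n)"
          by (rule arith_final[OF V0 g1 Cm0 N1 K1 d0 d1]) (use n in simp)
        thus "2 / (1 - \<gamma>) * sqrt (Cm * (4 * Bd)) \<le> 16 * ((Rmax / (1 - \<gamma>)) / (1 - \<gamma>)) * sqrt (Cm * L / real n)"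
          unfolding Bd_def L_def N_def K_def M.V_def by simp
      qed
    qed
    have "1 - \<delta> \<le> 1 - measure_pmf.prob (dataset n (Ddist R P dD)) bad" using pbad by simp
    also have "\<dots> = measure_pmf.prob (dataset n (Ddist R P dD)) (UNIV - bad)"
      using measure_pmf.prob_compl[of bad "dataset n (Ddist R P dD)"] by simp
    also have "\<dots> \<le> measure_pmf.prob (dataset n (Ddist R P dD)) Tgt"
      by (rule measure_pmf.finite_measure_mono[OF sub]) simp
    finally show ?thesis .
  qed
qed

end
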